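(* Let $\mathbf{A}=(a_{ij})$ be an $m\times n$ binary array (each entry is $0$ or $1$) with row set $R$ and column set $C$, and assume no row and no column of $\mathbf{A}$ consists only of zeros. For $X\subset R$ and $Y\subset C$ define \[ V(X)=\sum_{i\in X}\sum_{j\in C}a_{ij},\qquad V(Y)=\sum_{i\in R}\sum_{j\in Y}a_{ij},\qquad a(X,Y)=\sum_{i\in X}\sum_{j\in Y}a_{ij}, \] and for nonempty $X\subset R$, $Y\subset C$ define $d(X,Y)=\dfrac{a(X,Y)}{V(X)\,V(Y)}$. Let $0<\delta<\frac14$, let $X\subset R$ and $Y\subset C$ be nonempty, and let $X^*\subset X$ and $Y^*\subset Y$ satisfy $\frac{V(X^* )}{V(X)}\ge 1-\delta$ and $\frac{V(Y^* )}{V(Y)}\ge 1-\delta$. Then \[ |d(X,Y)-d(X^*,Y^* )|\le 4\delta . \] *)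

theory Defs
  imports Main Complex_Main
begin

definition binary_array :: "'r set \<Rightarrow> 'c set \<Rightarrow> ('r \<Rightarrow> 'c \<Rightarrow> real) \<Rightarrow> bool" where
  "binary_array R C a \<longleftrightarrow> finite R \<and> finite C \<and> (\<forall>i\<in>R. \<forall>j\<in>C. a i j = 0 \<or> a i j = 1)"

definition no_zero_lines :: "'r set \<Rightarrow> 'c set \<Rightarrow> ('r \<Rightarrow> 'c \<Rightarrow> real) \<Rightarrow> bool" where
  "no_zero_lines R C a \<longleftrightarrow> (\<forall>i\<in>R. \<exists>j\<in>C. a i j \<noteq> 0) \<and> (\<forall>j\<in>C. \<exists>i\<in>R. a i j \<noteq> 0)"

definition Vrow :: "'c set \<Rightarrow> ('r \<Rightarrow> 'c \<Rightarrow> real) \<Rightarrow> 'r set \<Rightarrow> real" where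
  "Vrow C a X = (\<Sum>i\<in>X. \<Sum>j\<in>C. a i j)"

definition Vcol :: "'r set \<Rightarrow> ('r \<Rightarrow> 'c \<Rightarrow> real) \<Rightarrow> 'c set \<Rightarrow> real" where
  "Vcol R a Y = (\<Sum>i\<in>R. \<Sum>j\<in>Y. a i j)"

definition aXY :: "('r \<Rightarrow> 'c \<Rightarrow> real) \<Rightarrow> 'r set \<Rightarrow> 'c set \<Rightarrow> real" where
  "aXY a X Y = (\<Sum>i\<in>X. \<Sum>j\<in>Y. a i j)"

definition dens :: "'r set \<Rightarrow> 'c set \<Rightarrow> ('r \<Rightarrow> 'c \<Rightarrow> real) \<Rightarrow> 'r set \<Rightarrow> 'c set \<Rightarrow> real" where
  "dens R C a X Y = aXY a X Y / (Vrow C a X * Vcol R a Y)"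

end

theory Submission imports Defs begin
lemma alg:
  fixes P Q Ps Qs A As d :: real
  assumes P: "P \<ge> 1" and Q: "Q \<ge> 1" and Ps: "Ps \<ge> (1-d)*P" and Qs: "Qs \<ge> (1-d)*Q"
    and As0: "0 \<le> As" and AsA: "As \<le> A" and AP: "A \<le> P"
    and diff: "A - As \<le> (P-Ps)+(Q-Qs)" and d0: "0<d" and d1: "d<1/4"
    and PsP: "Ps \<le> P" and QsQ: "Qs \<le> Q"
  shows "\<bar>A/(P*Q) - As/(Ps*Qs)\<bar> \<le> 4*d"
proof -
  have "(1-d)*P > 0" using P d1 by simp
  hence Ps0: "Ps > 0" using Ps by linarith
  have "(1-d)*Q > 0" using Q d1 by simp
  hence Qs0: "Qs > 0" using Qs by linarith
  have PQ: "Ps*Qs \<le> P*Q" using PsP QsQ Ps0 Qs0 by (simp add: mult_mono)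
  have PQ0: "P*Q > 0" using P Q by simp
  have l1: "As/(P*Q) \<le> As/(Ps*Qs)" using PQ Ps0 Qs0 As0 by (simp add: frac_le)
  have "A/(P*Q) - As/(P*Q) = (A-As)/(P*Q)" by (simp add: diff_divide_distrib)
  also have "\<dots> \<le> (d*P + d*Q)/(P*Q)" using diff Ps Qs PQ0
    by (intro divide_right_mono) (auto simp: algebra_simps)
  also have "\<dots> = d/Q + d/P" using P Q by (simp add: field_simps)
  also have "\<dots> \<le> 2*d" proof -
    have "d/Q \<le> d" using Q d0 by (simp add: divide_le_eq)
    moreover have "d/P \<le> d" using P d0 by (simp add: divide_le_eq)
    ultimately show ?thesis by simp
  qed
  finally have low: "A/(P*Q) - As/(Ps*Qs) \<le> 4*d" using l1 d0 by linarith
  define k where "k = (1-d)^2"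
  have k0: "k > 0" using d1 by (simp add: k_def)
  have kPQ: "k*(P*Q) \<le> Ps*Qs" proof -
    have "k*(P*Q) = ((1-d)*P)*((1-d)*Q)" by (simp add: k_def power2_eq_square algebra_simps)
    also have "\<dots> \<le> Ps*Qs" using Ps Qs d1 P Q Ps0 by (intro mult_mono) auto
    finally show ?thesis .
  qed
  have A0: "0 \<le> A" using As0 AsA by simp
  have "As/(Ps*Qs) \<le> A/(Ps*Qs)" using AsA Ps0 Qs0 by (simp add: divide_right_mono)
  also have "\<dots> \<le> A/(k*(P*Q))" using kPQ k0 PQ0 A0 by (simp add: frac_le)
  also have "\<dots> = (A/(P*Q)) * (1/k)" by simp
  finally have u1: "As/(Ps*Qs) \<le> (A/(P*Q)) * (1/k)" .
  have "P \<le> P*Q" using P Q by (simp add: mult_le_cancel_left1)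
  hence dle: "A/(P*Q) \<le> 1" using AP PQ0 by (simp add: divide_le_eq)
  have dge: "0 \<le> A/(P*Q)" using A0 PQ0 by simp
  have kk: "1/k - 1 \<le> 4*d" proof -
    have eq: "(1+4*d)*k = 1 + d*(2 - 7*d + 4*d^2)" unfolding k_def by (simp add: power2_eq_square algebra_simps)
    have "0 \<le> 4*d^2" by simp
    hence "0 < 2 - 7*d + 4*d^2" using d1 by linarith
    hence "0 \<le> d*(2 - 7*d + 4*d^2)" using d0 by simp
    hence "1 \<le> (1+4*d)*k" using eq by linarith
    thus ?thesis using k0 by (simp add: divide_le_eq algebra_simps)
  qed
  have "(A/(P*Q)) * (1/k) - A/(P*Q) = (A/(P*Q)) * (1/k - 1)" by (metis mult.right_neutral right_diff_distrib)
  also have "\<dots> \<le> 1 * (4*d)" proof (rule mult_mono)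
    show "1/k - 1 \<le> 4*d" by (rule kk)
    have "k \<le> 1" unfolding k_def using d0 d1 by (intro power_le_one) auto
    thus "0 \<le> 1/k - 1" using k0 by (simp add: le_divide_eq_1)
  qed (use dle dge d0 in auto)
  finally have up: "As/(Ps*Qs) - A/(P*Q) \<le> 4*d" using u1 by simp
  show ?thesis using low up by linarith
qed

theorem mainTheorem1:
  fixes R :: "'r set" and C :: "'c set" and a :: "'r \<Rightarrow> 'c \<Rightarrow> real"
    and \<delta> :: real and X Xs :: "'r set" and Y Ys :: "'c set"
  assumes "binary_array R C a"
    and "no_zero_lines R C a"
    and "0 < \<delta>" and "\<delta> < 1/4"
    and "X \<subseteq> R" and "X \<noteq> {}" and "Y \<subseteq> C" and "Y \<noteq> {}"
    and "Xs \<subseteq> X" and "Ys \<subseteq> Y"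
    and "Vrow C a Xs / Vrow C a X \<ge> 1 - \<delta>"
    and "Vcol R a Ys / Vcol R a Y \<ge> 1 - \<delta>"
  shows "\<bar>dens R C a X Y - dens R C a Xs Ys\<bar> \<le> 4 * \<delta>"
proof -
  have fR: "finite R" and fC: "finite C" and b: "\<And>i j. i\<in>R \<Longrightarrow> j\<in>C \<Longrightarrow> a i j = 0 \<or> a i j = 1"
    using assms(1) unfolding binary_array_def by auto
  have nn: "\<And>i j. i\<in>R \<Longrightarrow> j\<in>C \<Longrightarrow> 0 \<le> a i j" using b by force
  have fX: "finite X" "finite Xs" "finite (X - Xs)" using fR assms(5,9) finite_subset by blast+
  have fY: "finite Y" "finite Ys" "finite (Y - Ys)" using fC assms(7,10) finite_subset by blast+
  obtain i0 where i0: "i0 \<in> X" using assms(6) by blast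
  obtain j1 where j1: "j1 \<in> C" "a i0 j1 \<noteq> 0" using assms(2,5) i0 unfolding no_zero_lines_def by blast
  have "a i0 j1 = 1" using b j1 i0 assms(5) by blast
  have row1: "1 \<le> (\<Sum>j\<in>C. a i0 j)"
  proof -
    have "(\<Sum>j\<in>{j1}. a i0 j) \<le> (\<Sum>j\<in>C. a i0 j)"
      using j1 fC i0 assms(5) nn by (intro sum_mono2) auto
    thus ?thesis using \<open>a i0 j1 = 1\<close> by simp
  qed
  have P1: "1 \<le> Vrow C a X"
  proof -
    have "(\<Sum>i\<in>{i0}. \<Sum>j\<in>C. a i j) \<le> (\<Sum>i\<in>X. \<Sum>j\<in>C. a i j)"
      using i0 fX assms(5) nn by (intro sum_mono2) (auto intro!: sum_nonneg)
    thus ?thesis using row1 unfolding Vrow_def by simp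
  qed
  obtain j0 where j0: "j0 \<in> Y" using assms(8) by blast
  obtain i1 where i1: "i1 \<in> R" "a i1 j0 \<noteq> 0" using assms(2,7) j0 unfolding no_zero_lines_def by blast
  have "a i1 j0 = 1" using b i1 j0 assms(7) by blast
  have Q1: "1 \<le> Vcol R a Y"
  proof -
    have "(\<Sum>i\<in>{i1}. \<Sum>j\<in>Y. a i j) \<le> (\<Sum>i\<in>R. \<Sum>j\<in>Y. a i j)"
      using i1 fR assms(7) nn by (intro sum_mono2) (auto intro!: sum_nonneg)
    moreover have "(\<Sum>j\<in>{j0}. a i1 j) \<le> (\<Sum>j\<in>Y. a i1 j)"
      using j0 fY i1 assms(7) nn by (intro sum_mono2) auto
    ultimately show ?thesis using \<open>a i1 j0 = 1\<close> unfolding Vcol_def by simp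
  qed
  have Ps: "Vrow C a Xs \<ge> (1-\<delta>) * Vrow C a X" using assms(11) P1 by (simp add: le_divide_eq)
  have Qs: "Vcol R a Ys \<ge> (1-\<delta>) * Vcol R a Y" using assms(12) Q1 by (simp add: le_divide_eq)
  have As0: "0 \<le> aXY a Xs Ys" unfolding aXY_def using assms(5,7,9,10) nn
    by (intro sum_nonneg) blast
  have rowsplit: "sum f X = sum f Xs + sum f (X - Xs)" for f :: "'r\<Rightarrow>real"
    using sum.subset_diff[OF assms(9) fX(1), of f] by simp
  have colsplit: "sum f Y = sum f Ys + sum f (Y - Ys)" for f :: "'c\<Rightarrow>real"
    using sum.subset_diff[OF assms(10) fY(1), of f] by simp
  have colsplitC: "sum f C = sum f Y + sum f (C - Y)" for f :: "'c\<Rightarrow>real"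
    using sum.subset_diff[OF assms(7) fC, of f] by simp
  have e1: "aXY a X Y = aXY a Xs Y + aXY a (X-Xs) Y" unfolding aXY_def by (rule rowsplit)
  have e2: "aXY a Xs Y = aXY a Xs Ys + aXY a Xs (Y-Ys)" unfolding aXY_def
    by (subst colsplit) (simp add: sum.distrib)
  have e3: "Vrow C a X = Vrow C a Xs + Vrow C a (X - Xs)" unfolding Vrow_def by (rule rowsplit)
  have e4: "Vcol R a Y = Vcol R a Ys + Vcol R a (Y - Ys)" unfolding Vcol_def
    by (subst colsplit) (simp add: sum.distrib)
  have i1': "aXY a (X-Xs) Y \<le> Vrow C a (X-Xs)" unfolding aXY_def Vrow_def
  proof (rule sum_mono)
    fix i assume "i \<in> X - Xs"
    hence iR: "i \<in> R" using assms(5) by blast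
    have "sum (a i) C = sum (a i) Y + sum (a i) (C - Y)" by (rule colsplitC)
    moreover have "0 \<le> sum (a i) (C - Y)" using nn iR by (intro sum_nonneg) auto
    ultimately show "sum (a i) Y \<le> sum (a i) C" by simp
  qed
  have i2: "aXY a Xs (Y-Ys) \<le> Vcol R a (Y-Ys)" unfolding aXY_def Vcol_def
  proof -
    have "(\<Sum>i\<in>R. sum (a i) (Y - Ys)) = (\<Sum>i\<in>Xs. sum (a i) (Y - Ys)) + (\<Sum>i\<in>R - Xs. sum (a i) (Y - Ys))"
      using sum.subset_diff[OF order_trans[OF assms(9,5)] fR, of "\<lambda>i. sum (a i) (Y - Ys)"] by simp
    moreover have "0 \<le> (\<Sum>i\<in>R - Xs. sum (a i) (Y - Ys))"
      using nn assms(7) by (intro sum_nonneg) auto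
    ultimately show "(\<Sum>i\<in>Xs. sum (a i) (Y - Ys)) \<le> (\<Sum>i\<in>R. sum (a i) (Y - Ys))" by simp
  qed
  have n1: "0 \<le> aXY a (X-Xs) Y" unfolding aXY_def using assms(5,7) nn by (intro sum_nonneg) blast
  have n2: "0 \<le> aXY a Xs (Y-Ys)" unfolding aXY_def using assms(5,7,9) nn by (intro sum_nonneg) blast
  have n3: "0 \<le> Vrow C a (X-Xs)" unfolding Vrow_def using assms(5) nn by (intro sum_nonneg) blast
  have n4: "0 \<le> Vcol R a (Y-Ys)" unfolding Vcol_def using assms(7) nn by (intro sum_nonneg) blast
  have AP: "aXY a X Y \<le> Vrow C a X" unfolding aXY_def Vrow_def
  proof (rule sum_mono)
    fix i assume "i \<in> X"
    hence iR: "i \<in> R" using assms(5) by blast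
    have "sum (a i) C = sum (a i) Y + sum (a i) (C - Y)" by (rule colsplitC)
    moreover have "0 \<le> sum (a i) (C - Y)" using nn iR by (intro sum_nonneg) auto
    ultimately show "sum (a i) Y \<le> sum (a i) C" by simp
  qed
  show ?thesis unfolding dens_def
    by (rule alg[OF P1 Q1 Ps Qs As0 _ AP _ assms(3,4)])
       (use e1 e2 e3 e4 i1' i2 n1 n2 n3 n4 in linarith)+
qed

end
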